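(* Let $G$ be a bus graph containing an $(I,O)$-chain (as defined below). Then in any realization $\Gamma$ of $G$, $\Gamma(I)$ and $\Gamma(O)$ are parallel.
   Context: A bus graph is a finite bipartite graph $G=(\mathcal{B},\mathcal{C};\mathcal{E})$ with $\deg(c)\le 4$ for all $c\in\mathcal{C}$. A realization $\Gamma$ of $G$ in the integer grid is a drawing such that: (1) each $B\in\mathcal{B}$ is drawn as a closed line segment $\Gamma(B)$ along a grid line (a "bus"); (2) each $c\in\mathcal{C}$ is drawn as a grid point $\Gamma(c)$; (3) each edge $(B,c)\in\mathcal{E}$ is drawn as a closed line segment along a grid line between a point of $\Gamma(B)$ and $\Gamma(c)$, perpendicular to $\Gamma(B)$, containing no connectors or buses other than $\Gamma(B)$ and $\Gamma(c)$ (edges may cross other edges); (4) no two buses or connectors intersect. An $(A,B)$-perp consists of three distinct $\mathcal{C}$-vertices $x,y,z$, five distinct $\mathcal{B}$-vertices $A,A',B,B',C$, and the twelve edges $(A,x),(A',x),(B,x),(B',x)$, $(A,y),(A',y),(B,y),(C,y)$, $(A,z),(A',z),(B',z),(C,z)$ (for different names substitute accordingly, e.g. an $(I_3,O)$-perp has $I_3$ in the role of $A$ and $O$ in the role of $B$). A $(B,o)$-flipper consists of an $(A,B)$-perp (for some fresh $A$) together with an additional $\mathcal{C}$-vertex $o$ and additional edges $(B,o),(B',o)$. An $(I,O)$-chain consists of vertex-disjoint copies of an $(I,o_1)$-flipper, an $(I_1,o_2)$-flipper, an $(I_2,o_3)$-flipper and an $(I_3,O)$-perp, together with the three additional edges $(I_1,o_1),(I_2,o_2),(I_3,o_3)$.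 *)

theory Defs imports Main begin

definition bus_graph :: "'b set \<Rightarrow> 'c set \<Rightarrow> ('b \<times> 'c) set \<Rightarrow> bool" where
  "bus_graph Bs Cs E \<longleftrightarrow> finite Bs \<and> finite Cs \<and> E \<subseteq> Bs \<times> Cs \<and>
     (\<forall>c\<in>Cs. card {B. (B, c) \<in> E} \<le> 4)"

datatype orient = Hor | Ver

(* A bus drawing: (orientation, fixed coordinate, lo, hi).
   Hor k lo hi = {(x,k) | lo \<le> x \<le> hi};  Ver k lo hi = {(k,y) | lo \<le> y \<le> hi}. *)
type_synonym seg = "orient \<times> int \<times> int \<times> int"

fun seg_orient :: "seg \<Rightarrow> orient" where
  "seg_orient (d, k, lo, hi) = d"

fun seg_ok :: "seg \<Rightarrow> bool" where
  "seg_ok (d, k, lo, hi) = (lo < hi)"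

fun seg_pts :: "seg \<Rightarrow> (int \<times> int) set" where
  "seg_pts (Hor, k, lo, hi) = {(x, y). y = k \<and> lo \<le> x \<and> x \<le> hi}"
| "seg_pts (Ver, k, lo, hi) = {(x, y). x = k \<and> lo \<le> y \<and> y \<le> hi}"

(* grid points of the closed axis-parallel segment between p and q
   (used only when p and q lie on a common grid line) *)
definition gseg :: "int \<times> int \<Rightarrow> int \<times> int \<Rightarrow> (int \<times> int) set" where
  "gseg p q = {(x, y). min (fst p) (fst q) \<le> x \<and> x \<le> max (fst p) (fst q) \<and>
                        min (snd p) (snd q) \<le> y \<and> y \<le> max (snd p) (snd q)}"

definition perp_to :: "seg \<Rightarrow> int \<times> int \<Rightarrow> int \<times> int \<Rightarrow> bool" where
  "perp_to s p q \<longleftrightarrow> (if seg_orient s = Hor then fst p = fst q else snd p = snd q)"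

definition realization ::
  "'b set \<Rightarrow> 'c set \<Rightarrow> ('b \<times> 'c) set \<Rightarrow> ('b \<Rightarrow> seg) \<Rightarrow> ('c \<Rightarrow> int \<times> int) \<Rightarrow> bool" where
  "realization Bs Cs E \<Gamma>b \<Gamma>c \<longleftrightarrow>
     (\<forall>B\<in>Bs. seg_ok (\<Gamma>b B)) \<and>
     (\<forall>(B, c)\<in>E. \<exists>p\<in>seg_pts (\<Gamma>b B). perp_to (\<Gamma>b B) p (\<Gamma>c c) \<and>
         (\<forall>B'\<in>Bs. B' \<noteq> B \<longrightarrow> gseg p (\<Gamma>c c) \<inter> seg_pts (\<Gamma>b B') = {}) \<and>
         (\<forall>c'\<in>Cs. c' \<noteq> c \<longrightarrow> \<Gamma>c c' \<notin> gseg p (\<Gamma>c c))) \<and>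
     (\<forall>B\<in>Bs. \<forall>B'\<in>Bs. B \<noteq> B' \<longrightarrow> seg_pts (\<Gamma>b B) \<inter> seg_pts (\<Gamma>b B') = {}) \<and>
     (\<forall>c\<in>Cs. \<forall>c'\<in>Cs. c \<noteq> c' \<longrightarrow> \<Gamma>c c \<noteq> \<Gamma>c c') \<and>
     (\<forall>B\<in>Bs. \<forall>c\<in>Cs. \<Gamma>c c \<notin> seg_pts (\<Gamma>b B))"

definition is_perp :: "('b \<times> 'c) set \<Rightarrow> 'b \<Rightarrow> 'b \<Rightarrow> 'b \<Rightarrow> 'b \<Rightarrow> 'b \<Rightarrow> 'c \<Rightarrow> 'c \<Rightarrow> 'c \<Rightarrow> bool" where
  "is_perp E A A' B B' C x y z \<longleftrightarrow>
     distinct [x, y, z] \<and> distinct [A, A', B, B', C] \<and>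
     {(A,x),(A',x),(B,x),(B',x),(A,y),(A',y),(B,y),(C,y),(A,z),(A',z),(B',z),(C,z)} \<subseteq> E"

definition is_flipper :: "('b \<times> 'c) set \<Rightarrow> 'b \<Rightarrow> 'b \<Rightarrow> 'b \<Rightarrow> 'b \<Rightarrow> 'b \<Rightarrow> 'c \<Rightarrow> 'c \<Rightarrow> 'c \<Rightarrow> 'c \<Rightarrow> bool" where
  "is_flipper E A A' B B' C x y z w \<longleftrightarrow>
     is_perp E A A' B B' C x y z \<and> w \<notin> {x, y, z} \<and> (B, w) \<in> E \<and> (B', w) \<in> E"

definition has_chain :: "('b \<times> 'c) set \<Rightarrow> 'b \<Rightarrow> 'b \<Rightarrow> bool" where
  "has_chain E Ib Ob \<longleftrightarrow>
    (\<exists>A1 A1' B1' C1 x1 y1 z1 o1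
       A2 A2' I1 B2' C2 x2 y2 z2 o2
       A3 A3' I2 B3' C3 x3 y3 z3 o3
       I3 A4' B4' C4 x4 y4 z4.
      is_flipper E A1 A1' Ib B1' C1 x1 y1 z1 o1 \<and>
      is_flipper E A2 A2' I1 B2' C2 x2 y2 z2 o2 \<and>
      is_flipper E A3 A3' I2 B3' C3 x3 y3 z3 o3 \<and>
      is_perp E I3 A4' Ob B4' C4 x4 y4 z4 \<and>
      (let bs = [{A1, A1', Ib, B1', C1}, {A2, A2', I1, B2', C2},
                 {A3, A3', I2, B3', C3}, {I3, A4', Ob, B4', C4}];
           cs = [{x1, y1, z1, o1}, {x2, y2, z2, o2}, {x3, y3, z3, o3}, {x4, y4, z4}]
       in \<forall>i<4. \<forall>j<4. i \<noteq> j \<longrightarrow> bs ! i \<inter> bs ! j = {} \<and> cs ! i \<inter> cs ! j = {}) \<and>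
      (I1, o1) \<in> E \<and> (I2, o2) \<in> E \<and> (I3, o3) \<in> E)"

end

theory Submission imports Defs begin

lemma pair_hor:
  assumes "p1 \<in> seg_pts s1" "p2 \<in> seg_pts s2" "seg_orient s1 = Hor" "seg_orient s2 = Hor"
    "fst p1 = fst q" "fst p2 = fst q"
    "gseg p1 q \<inter> seg_pts s2 = {}" "gseg p2 q \<inter> seg_pts s1 = {}"
    "q \<notin> seg_pts s1" "q \<notin> seg_pts s2"
  shows "snd p1 \<noteq> snd q \<and> (snd p1 < snd q \<longleftrightarrow> snd q < snd p2)"
proof -
  obtain k1 l1 h1 where s1: "s1 = (Hor, k1, l1, h1)" using assms(3) by (cases s1) auto
  obtain k2 l2 h2 where s2: "s2 = (Hor, k2, l2, h2)" using assms(4) by (cases s2) auto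
  obtain a1 b1 where p1: "p1 = (a1, b1)" by (cases p1)
  obtain a2 b2 where p2: "p2 = (a2, b2)" by (cases p2)
  obtain qa qb where q: "q = (qa, qb)" by (cases q)
  have A: "b1 = k1" "l1 \<le> a1" "a1 \<le> h1" "b2 = k2" "l2 \<le> a2" "a2 \<le> h2" "a1 = qa" "a2 = qa"
    using assms(1,2,5,6) s1 s2 p1 p2 q by auto
  have n1: "qb \<noteq> k1" using assms(9) s1 q A by auto
  have n2: "qb \<noteq> k2" using assms(10) s2 q A by auto
  have g1: "p1 \<notin> gseg p2 q" using assms(8) assms(1) by blast
  have g2: "p2 \<notin> gseg p1 q" using assms(7) assms(2) by blast
  have c1: "\<not> (qb \<le> k1 \<and> k1 \<le> k2)" "\<not> (k2 \<le> k1 \<and> k1 \<le> qb)"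
    using g1 p1 p2 q A by (auto simp: gseg_def)
  have c2: "\<not> (qb \<le> k2 \<and> k2 \<le> k1)" "\<not> (k1 \<le> k2 \<and> k2 \<le> qb)"
    using g2 p1 p2 q A by (auto simp: gseg_def)
  show ?thesis using n1 n2 c1 c2 A p1 p2 q by auto
qed

lemma pair_ver:
  assumes "p1 \<in> seg_pts s1" "p2 \<in> seg_pts s2" "seg_orient s1 = Ver" "seg_orient s2 = Ver"
    "snd p1 = snd q" "snd p2 = snd q"
    "gseg p1 q \<inter> seg_pts s2 = {}" "gseg p2 q \<inter> seg_pts s1 = {}"
    "q \<notin> seg_pts s1" "q \<notin> seg_pts s2"
  shows "fst p1 \<noteq> fst q \<and> (fst p1 < fst q \<longleftrightarrow> fst q < fst p2)"
proof -
  obtain k1 l1 h1 where s1: "s1 = (Ver, k1, l1, h1)" using assms(3) by (cases s1) auto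
  obtain k2 l2 h2 where s2: "s2 = (Ver, k2, l2, h2)" using assms(4) by (cases s2) auto
  obtain a1 b1 where p1: "p1 = (a1, b1)" by (cases p1)
  obtain a2 b2 where p2: "p2 = (a2, b2)" by (cases p2)
  obtain qa qb where q: "q = (qa, qb)" by (cases q)
  have A: "a1 = k1" "l1 \<le> b1" "b1 \<le> h1" "a2 = k2" "l2 \<le> b2" "b2 \<le> h2" "b1 = qb" "b2 = qb"
    using assms(1,2,5,6) s1 s2 p1 p2 q by auto
  have n1: "qa \<noteq> k1" using assms(9) s1 q A by auto
  have n2: "qa \<noteq> k2" using assms(10) s2 q A by auto
  have g1: "p1 \<notin> gseg p2 q" using assms(8) assms(1) by blast
  have g2: "p2 \<notin> gseg p1 q" using assms(7) assms(2) by blast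
  have c1: "\<not> (qa \<le> k1 \<and> k1 \<le> k2)" "\<not> (k2 \<le> k1 \<and> k1 \<le> qa)"
    using g1 p1 p2 q A by (auto simp: gseg_def)
  have c2: "\<not> (qa \<le> k2 \<and> k2 \<le> k1)" "\<not> (k1 \<le> k2 \<and> k2 \<le> qa)"
    using g2 p1 p2 q A by (auto simp: gseg_def)
  show ?thesis using n1 n2 c1 c2 A p1 p2 q by auto
qed

lemma edge_pt:
  assumes R: "realization Bs Cs E \<Gamma>b \<Gamma>c" and e: "(B, c) \<in> E"
  obtains p where "p \<in> seg_pts (\<Gamma>b B)" "perp_to (\<Gamma>b B) p (\<Gamma>c c)"
    "\<And>B'. B' \<in> Bs \<Longrightarrow> B' \<noteq> B \<Longrightarrow> gseg p (\<Gamma>c c) \<inter> seg_pts (\<Gamma>b B') = {}"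
proof -
  have "\<forall>(B, c)\<in>E. \<exists>p\<in>seg_pts (\<Gamma>b B). perp_to (\<Gamma>b B) p (\<Gamma>c c) \<and>
         (\<forall>B'\<in>Bs. B' \<noteq> B \<longrightarrow> gseg p (\<Gamma>c c) \<inter> seg_pts (\<Gamma>b B') = {}) \<and>
         (\<forall>c'\<in>Cs. c' \<noteq> c \<longrightarrow> \<Gamma>c c' \<notin> gseg p (\<Gamma>c c))"
    using R unfolding realization_def by (elim conjE)
  then have "\<exists>p\<in>seg_pts (\<Gamma>b B). perp_to (\<Gamma>b B) p (\<Gamma>c c) \<and>
         (\<forall>B'\<in>Bs. B' \<noteq> B \<longrightarrow> gseg p (\<Gamma>c c) \<inter> seg_pts (\<Gamma>b B') = {})"
    using e by fastforce
  then show ?thesis using that by blast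
qed

lemma no3:
  assumes R: "realization Bs Cs E \<Gamma>b \<Gamma>c" and sub: "E \<subseteq> Bs \<times> Cs"
    and e: "(B1, c) \<in> E" "(B2, c) \<in> E" "(B3, c) \<in> E" and d: "distinct [B1, B2, B3]"
  shows "\<not> (seg_orient (\<Gamma>b B1) = seg_orient (\<Gamma>b B2) \<and> seg_orient (\<Gamma>b B2) = seg_orient (\<Gamma>b B3))"
proof
  assume h: "seg_orient (\<Gamma>b B1) = seg_orient (\<Gamma>b B2) \<and> seg_orient (\<Gamma>b B2) = seg_orient (\<Gamma>b B3)"
  have mem: "B1 \<in> Bs" "B2 \<in> Bs" "B3 \<in> Bs" "c \<in> Cs" using sub e by auto
  have nq: "\<Gamma>c c \<notin> seg_pts (\<Gamma>b B1)" "\<Gamma>c c \<notin> seg_pts (\<Gamma>b B2)" "\<Gamma>c c \<notin> seg_pts (\<Gamma>b B3)"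
  proof -
    have "\<forall>B\<in>Bs. \<forall>c\<in>Cs. \<Gamma>c c \<notin> seg_pts (\<Gamma>b B)"
      using R unfolding realization_def by (elim conjE)
    then show "\<Gamma>c c \<notin> seg_pts (\<Gamma>b B1)" "\<Gamma>c c \<notin> seg_pts (\<Gamma>b B2)" "\<Gamma>c c \<notin> seg_pts (\<Gamma>b B3)"
      using mem by blast+
  qed
  obtain p1 where p1: "p1 \<in> seg_pts (\<Gamma>b B1)" "perp_to (\<Gamma>b B1) p1 (\<Gamma>c c)"
    "\<And>B'. B' \<in> Bs \<Longrightarrow> B' \<noteq> B1 \<Longrightarrow> gseg p1 (\<Gamma>c c) \<inter> seg_pts (\<Gamma>b B') = {}"
    using edge_pt[OF R e(1)] by blast
  obtain p2 where p2: "p2 \<in> seg_pts (\<Gamma>b B2)" "perp_to (\<Gamma>b B2) p2 (\<Gamma>c c)"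
    "\<And>B'. B' \<in> Bs \<Longrightarrow> B' \<noteq> B2 \<Longrightarrow> gseg p2 (\<Gamma>c c) \<inter> seg_pts (\<Gamma>b B') = {}"
    using edge_pt[OF R e(2)] by blast
  obtain p3 where p3: "p3 \<in> seg_pts (\<Gamma>b B3)" "perp_to (\<Gamma>b B3) p3 (\<Gamma>c c)"
    "\<And>B'. B' \<in> Bs \<Longrightarrow> B' \<noteq> B3 \<Longrightarrow> gseg p3 (\<Gamma>c c) \<inter> seg_pts (\<Gamma>b B') = {}"
    using edge_pt[OF R e(3)] by blast
  show False
  proof (cases "seg_orient (\<Gamma>b B1)")
    case Hor
    then have o: "seg_orient (\<Gamma>b B1) = Hor" "seg_orient (\<Gamma>b B2) = Hor" "seg_orient (\<Gamma>b B3) = Hor"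
      using h by auto
    have f: "fst p1 = fst (\<Gamma>c c)" "fst p2 = fst (\<Gamma>c c)" "fst p3 = fst (\<Gamma>c c)"
      using p1(2) p2(2) p3(2) o by (auto simp: perp_to_def)
    have a: "snd p1 \<noteq> snd (\<Gamma>c c) \<and> (snd p1 < snd (\<Gamma>c c) \<longleftrightarrow> snd (\<Gamma>c c) < snd p2)"
      by (rule pair_hor[OF p1(1) p2(1) o(1) o(2) f(1) f(2) p1(3) p2(3) nq(1) nq(2)]) (use mem d in auto)
    have b: "snd p2 \<noteq> snd (\<Gamma>c c) \<and> (snd p2 < snd (\<Gamma>c c) \<longleftrightarrow> snd (\<Gamma>c c) < snd p3)"
      by (rule pair_hor[OF p2(1) p3(1) o(2) o(3) f(2) f(3) p2(3) p3(3) nq(2) nq(3)]) (use mem d in auto)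
    have c: "snd p1 \<noteq> snd (\<Gamma>c c) \<and> (snd p1 < snd (\<Gamma>c c) \<longleftrightarrow> snd (\<Gamma>c c) < snd p3)"
      by (rule pair_hor[OF p1(1) p3(1) o(1) o(3) f(1) f(3) p1(3) p3(3) nq(1) nq(3)]) (use mem d in auto)
    show False using a b c by auto
  next
    case Ver
    then have o: "seg_orient (\<Gamma>b B1) = Ver" "seg_orient (\<Gamma>b B2) = Ver" "seg_orient (\<Gamma>b B3) = Ver"
      using h by auto
    have f: "snd p1 = snd (\<Gamma>c c)" "snd p2 = snd (\<Gamma>c c)" "snd p3 = snd (\<Gamma>c c)"
      using p1(2) p2(2) p3(2) o by (auto simp: perp_to_def)
    have a: "fst p1 \<noteq> fst (\<Gamma>c c) \<and> (fst p1 < fst (\<Gamma>c c) \<longleftrightarrow> fst (\<Gamma>c c) < fst p2)"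
      by (rule pair_ver[OF p1(1) p2(1) o(1) o(2) f(1) f(2) p1(3) p2(3) nq(1) nq(2)]) (use mem d in auto)
    have b: "fst p2 \<noteq> fst (\<Gamma>c c) \<and> (fst p2 < fst (\<Gamma>c c) \<longleftrightarrow> fst (\<Gamma>c c) < fst p3)"
      by (rule pair_ver[OF p2(1) p3(1) o(2) o(3) f(2) f(3) p2(3) p3(3) nq(2) nq(3)]) (use mem d in auto)
    have c: "fst p1 \<noteq> fst (\<Gamma>c c) \<and> (fst p1 < fst (\<Gamma>c c) \<longleftrightarrow> fst (\<Gamma>c c) < fst p3)"
      by (rule pair_ver[OF p1(1) p3(1) o(1) o(3) f(1) f(3) p1(3) p3(3) nq(1) nq(3)]) (use mem d in auto)
    show False using a b c by auto
  qed
qed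

lemma orient_cases: "(x::orient) = Hor \<or> x = Ver" by (cases x) auto

lemma perp_par:
  assumes R: "realization Bs Cs E \<Gamma>b \<Gamma>c" and sub: "E \<subseteq> Bs \<times> Cs"
    and P: "is_perp E A A' B B' C x y z"
  shows "seg_orient (\<Gamma>b A) \<noteq> seg_orient (\<Gamma>b B) \<and> seg_orient (\<Gamma>b B) = seg_orient (\<Gamma>b B')"
proof -
  note N = no3[OF R sub]
  have e: "(A,x)\<in>E" "(A',x)\<in>E" "(B,x)\<in>E" "(B',x)\<in>E" "(A,y)\<in>E" "(A',y)\<in>E" "(B,y)\<in>E" "(C,y)\<in>E"
    "(A,z)\<in>E" "(A',z)\<in>E" "(B',z)\<in>E" "(C,z)\<in>E" and d: "distinct [A, A', B, B', C]"
    using P unfolding is_perp_def by auto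
  have x1: "\<not> (seg_orient (\<Gamma>b A) = seg_orient (\<Gamma>b A') \<and> seg_orient (\<Gamma>b A') = seg_orient (\<Gamma>b B))"
    using N[OF e(1) e(2) e(3)] d by auto
  have x2: "\<not> (seg_orient (\<Gamma>b A) = seg_orient (\<Gamma>b A') \<and> seg_orient (\<Gamma>b A') = seg_orient (\<Gamma>b B'))"
    using N[OF e(1) e(2) e(4)] d by auto
  have x3: "\<not> (seg_orient (\<Gamma>b A) = seg_orient (\<Gamma>b B) \<and> seg_orient (\<Gamma>b B) = seg_orient (\<Gamma>b B'))"
    using N[OF e(1) e(3) e(4)] d by auto
  have x4: "\<not> (seg_orient (\<Gamma>b A') = seg_orient (\<Gamma>b B) \<and> seg_orient (\<Gamma>b B) = seg_orient (\<Gamma>b B'))"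
    using N[OF e(2) e(3) e(4)] d by auto
  have y1: "\<not> (seg_orient (\<Gamma>b A) = seg_orient (\<Gamma>b A') \<and> seg_orient (\<Gamma>b A') = seg_orient (\<Gamma>b C))"
    using N[OF e(5) e(6) e(8)] d by auto
  have y2: "\<not> (seg_orient (\<Gamma>b A) = seg_orient (\<Gamma>b B) \<and> seg_orient (\<Gamma>b B) = seg_orient (\<Gamma>b C))"
    using N[OF e(5) e(7) e(8)] d by auto
  have y3: "\<not> (seg_orient (\<Gamma>b A') = seg_orient (\<Gamma>b B) \<and> seg_orient (\<Gamma>b B) = seg_orient (\<Gamma>b C))"
    using N[OF e(6) e(7) e(8)] d by auto
  have z1: "\<not> (seg_orient (\<Gamma>b A) = seg_orient (\<Gamma>b B') \<and> seg_orient (\<Gamma>b B') = seg_orient (\<Gamma>b C))"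
    using N[OF e(9) e(11) e(12)] d by auto
  have z2: "\<not> (seg_orient (\<Gamma>b A') = seg_orient (\<Gamma>b B') \<and> seg_orient (\<Gamma>b B') = seg_orient (\<Gamma>b C))"
    using N[OF e(10) e(11) e(12)] d by auto
  have z3: "\<not> (seg_orient (\<Gamma>b A) = seg_orient (\<Gamma>b A') \<and> seg_orient (\<Gamma>b A') = seg_orient (\<Gamma>b B'))"
    using N[OF e(9) e(10) e(11)] d by auto
  show ?thesis
    using x1 x2 x3 x4 y1 y2 y3 z1 z2 z3
    by (cases "seg_orient (\<Gamma>b A)"; cases "seg_orient (\<Gamma>b A')"; cases "seg_orient (\<Gamma>b B)";
        cases "seg_orient (\<Gamma>b B')"; cases "seg_orient (\<Gamma>b C)") simp_all
qed

lemma flip_step: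
  assumes R: "realization Bs Cs E \<Gamma>b \<Gamma>c" and sub: "E \<subseteq> Bs \<times> Cs"
    and F: "is_flipper E A A' B B' C x y z w" and e: "(J, w) \<in> E" and nj: "J \<noteq> B" "J \<noteq> B'"
  shows "seg_orient (\<Gamma>b J) \<noteq> seg_orient (\<Gamma>b B)"
proof -
  have P: "is_perp E A A' B B' C x y z" and w: "(B, w) \<in> E" "(B', w) \<in> E"
    using F unfolding is_flipper_def by auto
  have d: "B \<noteq> B'" using P unfolding is_perp_def by auto
  have "seg_orient (\<Gamma>b B) = seg_orient (\<Gamma>b B')" using perp_par[OF R sub P] by auto
  moreover have "\<not> (seg_orient (\<Gamma>b B) = seg_orient (\<Gamma>b B') \<and> seg_orient (\<Gamma>b B') = seg_orient (\<Gamma>b J))"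
    using no3[OF R sub w(1) w(2) e] d nj by auto
  ultimately show ?thesis by auto
qed

theorem lemma6:
  fixes Bs :: "'b set" and Cs :: "'c set" and E :: "('b \<times> 'c) set"
    and \<Gamma>b :: "'b \<Rightarrow> seg" and \<Gamma>c :: "'c \<Rightarrow> int \<times> int" and Ib Ob :: 'b
  assumes "bus_graph Bs Cs E"
    and "has_chain E Ib Ob"
    and "realization Bs Cs E \<Gamma>b \<Gamma>c"
  shows "seg_orient (\<Gamma>b Ib) = seg_orient (\<Gamma>b Ob)"
proof -
  have sub: "E \<subseteq> Bs \<times> Cs" using assms(1) unfolding bus_graph_def by auto
  note R = assms(3)
  obtain A1 A1' B1' C1 x1 y1 z1 o1
       A2 A2' I1 B2' C2 x2 y2 z2 o2
       A3 A3' I2 B3' C3 x3 y3 z3 o3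
       I3 A4' B4' C4 x4 y4 z4 where
    F1: "is_flipper E A1 A1' Ib B1' C1 x1 y1 z1 o1" and
    F2: "is_flipper E A2 A2' I1 B2' C2 x2 y2 z2 o2" and
    F3: "is_flipper E A3 A3' I2 B3' C3 x3 y3 z3 o3" and
    P4: "is_perp E I3 A4' Ob B4' C4 x4 y4 z4" and
    D: "(let bs = [{A1, A1', Ib, B1', C1}, {A2, A2', I1, B2', C2},
                 {A3, A3', I2, B3', C3}, {I3, A4', Ob, B4', C4}];
           cs = [{x1, y1, z1, o1}, {x2, y2, z2, o2}, {x3, y3, z3, o3}, {x4, y4, z4}]
       in \<forall>i<4. \<forall>j<4. i \<noteq> j \<longrightarrow> bs ! i \<inter> bs ! j = {} \<and> cs ! i \<inter> cs ! j = {})" and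
    E1: "(I1, o1) \<in> E" and E2: "(I2, o2) \<in> E" and E3: "(I3, o3) \<in> E"
    using assms(2) unfolding has_chain_def by (elim exE conjE) (rule that, assumption+)
  have D01: "{A1, A1', Ib, B1', C1} \<inter> {A2, A2', I1, B2', C2} = {}"
    using D[unfolded Let_def, rule_format, of 0 1] by simp
  have D12: "{A2, A2', I1, B2', C2} \<inter> {A3, A3', I2, B3', C3} = {}"
    using D[unfolded Let_def, rule_format, of 1 2] by simp
  have D23: "{A3, A3', I2, B3', C3} \<inter> {I3, A4', Ob, B4', C4} = {}"
    using D[unfolded Let_def, rule_format, of 2 3] by simp
  have a: "seg_orient (\<Gamma>b I1) \<noteq> seg_orient (\<Gamma>b Ib)"
    by (rule flip_step[OF R sub F1 E1]) (use D01 in auto)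
  have b: "seg_orient (\<Gamma>b I2) \<noteq> seg_orient (\<Gamma>b I1)"
    by (rule flip_step[OF R sub F2 E2]) (use D12 in auto)
  have c: "seg_orient (\<Gamma>b I3) \<noteq> seg_orient (\<Gamma>b I2)"
    by (rule flip_step[OF R sub F3 E3]) (use D23 in auto)
  have d: "seg_orient (\<Gamma>b I3) \<noteq> seg_orient (\<Gamma>b Ob)"
    using perp_par[OF R sub P4] by auto
  show ?thesis using a b c d
    by (cases "seg_orient (\<Gamma>b Ib)"; cases "seg_orient (\<Gamma>b I1)"; cases "seg_orient (\<Gamma>b I2)";
        cases "seg_orient (\<Gamma>b I3)"; cases "seg_orient (\<Gamma>b Ob)") simp_all
qed

end
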